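(* Let $(X,d)$ be a proper metric space and let $X+_fW$ be a Hausdorff compactification of $X$ with the coarse Karlsson property. Then $X+_fW\in\mathrm{Pers}(\varepsilon_d)$, i.e. every $e\in\varepsilon_d$ is perspective for $X+_fW$.
   Context: $X+_fW$ denotes $X\sqcup W$ with closed sets the $D$ such that $D\cap X$ is closed in $X$, $D\cap W$ closed in $W$ and $f(D\cap X)\subseteq D$, for an admissible $f$ (sending $\emptyset$ to $\emptyset$ and preserving finite unions) from closed sets of $X$ to closed sets of $W$; here it is compact Hausdorff with $X$ dense. $\mathfrak{U}_f$ is the unique uniform structure of $X+_fW$; a set $S$ is $u$-small if $S\times S\subseteq u$. $\varepsilon_d$ is the bounded coarse structure: all $e\subseteq X\times X$ with $\sup\{d(x,y):(x,y)\in e\}<\infty$. A set $e\subseteq X\times X$ is perspective if $\mathrm{Cl}_{(X+_fW)^2}(e)\cap((X+_fW)^2-X^2)\subseteq\{(p,p):p\in W\}$; $\mathrm{Pers}(\varepsilon_d)$ consists of Hausdorff compactifications for which every element of $\varepsilon_d$ is perspective. A coarse arc between $x,y\in X$ is a map $\lambda:[0,t]\to X$ which is a coarse embedding for the metric coarse structures, with $\lambda(0)=x$, $\lambda(t)=y$. A set $\Upsilon$ of coarse arcs is equicoarse if (1) for every $r>0$ there is $s>0$ with $d(\lambda(a),\lambda(b))<s$ whenever $\lambda\in\Upsilon$, $a,b\in\mathrm{dom}\,\lambda$, $|a-b|<r$; and (2) for every $r>0$ there is $s>0$ with $|a-b|<s$ whenever $\lambda\in\Upsilon$ and $d(\lambda(a),\lambda(b))<r$.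 $X+_fW$ has the coarse Karlsson property if there is an equicoarse set $\Upsilon$ containing, for all $x,y\in X$, a coarse arc between $x$ and $y$, such that for every $u\in\mathfrak{U}_f$ there is a bounded $S\subseteq X$ such that every arc in $\Upsilon$ whose image does not meet $S$ has $u$-small image. *)

theory Defs
  imports "HOL-Analysis.Analysis"
begin

text \<open>The space X is the whole type 'a (a metric space); W is the carrier of a topology TW
on 'b. The set X + W is modelled as the disjoint sum 'a + 'b (Inl = X, Inr = W).\<close>

definition proper_metric :: "'a::metric_space itself \<Rightarrow> bool" where
  "proper_metric _ \<longleftrightarrow> (\<forall>S::'a set. bounded S \<and> closed S \<longrightarrow> compact S)"

definition sum_carrier :: "'b topology \<Rightarrow> ('a + 'b) set" where
  "sum_carrier TW = range Inl \<union> Inr ` topspace TW"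

definition admissible :: "('a::metric_space set \<Rightarrow> 'b set) \<Rightarrow> 'b topology \<Rightarrow> bool" where
  "admissible f TW \<longleftrightarrow>
     (\<forall>A. closed A \<longrightarrow> closedin TW (f A)) \<and> f {} = {} \<and>
     (\<forall>A B. closed A \<longrightarrow> closed B \<longrightarrow> f (A \<union> B) = f A \<union> f B)"

definition sum_closed :: "('a::metric_space set \<Rightarrow> 'b set) \<Rightarrow> 'b topology \<Rightarrow> ('a + 'b) set \<Rightarrow> bool" where
  "sum_closed f TW D \<longleftrightarrow> D \<subseteq> sum_carrier TW \<and> closed (Inl -` D) \<and>
     closedin TW (Inr -` D) \<and> f (Inl -` D) \<subseteq> Inr -` D"

definition sum_top :: "('a::metric_space set \<Rightarrow> 'b set) \<Rightarrow> 'b topology \<Rightarrow> ('a + 'b) topology" where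
  "sum_top f TW = topology (\<lambda>U. U \<subseteq> sum_carrier TW \<and> sum_closed f TW (sum_carrier TW - U))"

definition hausdorff_compactification :: "('a::metric_space set \<Rightarrow> 'b set) \<Rightarrow> 'b topology \<Rightarrow> bool" where
  "hausdorff_compactification f TW \<longleftrightarrow>
     istopology (\<lambda>U. U \<subseteq> sum_carrier TW \<and> sum_closed f TW (sum_carrier TW - U)) \<and>
     compact_space (sum_top f TW) \<and> Hausdorff_space (sum_top f TW) \<and>
     (sum_top f TW) closure_of (range Inl) = topspace (sum_top f TW)"

text \<open>The unique uniform structure of a compact Hausdorff space: the neighbourhoods of the
diagonal in the product.\<close>
definition unif :: "'c topology \<Rightarrow> ('c \<times> 'c) set set" where
  "unif T = {u. u \<subseteq> topspace T \<times> topspace T \<and>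
      (\<exists>V. openin (prod_topology T T) V \<and> (\<forall>p\<in>topspace T. (p, p) \<in> V) \<and> V \<subseteq> u)}"

definition small :: "('c \<times> 'c) set \<Rightarrow> 'c set \<Rightarrow> bool" where
  "small u S \<longleftrightarrow> S \<times> S \<subseteq> u"

definition bounded_coarse :: "('a::metric_space \<times> 'a) set set" where
  "bounded_coarse = {e. \<exists>R. \<forall>(x, y)\<in>e. dist x y \<le> R}"

definition perspective :: "('a::metric_space set \<Rightarrow> 'b set) \<Rightarrow> 'b topology \<Rightarrow> ('a \<times> 'a) set \<Rightarrow> bool" where
  "perspective f TW e \<longleftrightarrow>
     ((prod_topology (sum_top f TW) (sum_top f TW)) closure_of ((\<lambda>(x, y). (Inl x, Inl y)) ` e))
       \<inter> ((sum_carrier TW \<times> sum_carrier TW) - (range Inl \<times> range Inl))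
     \<subseteq> {(p, p) | p. p \<in> Inr ` topspace TW}"

definition Pers :: "('a::metric_space set \<Rightarrow> 'b set) \<Rightarrow> 'b topology \<Rightarrow> bool" where
  "Pers f TW \<longleftrightarrow> hausdorff_compactification f TW \<and> (\<forall>e\<in>bounded_coarse. perspective f TW e)"

definition coarse_embedding_on :: "real set \<Rightarrow> (real \<Rightarrow> 'a::metric_space) \<Rightarrow> bool" where
  "coarse_embedding_on D lam \<longleftrightarrow>
     (\<forall>r>0. \<exists>s>0. \<forall>a\<in>D. \<forall>b\<in>D. \<bar>a - b\<bar> < r \<longrightarrow> dist (lam a) (lam b) < s) \<and>
     (\<forall>r>0. \<exists>s>0. \<forall>a\<in>D. \<forall>b\<in>D. dist (lam a) (lam b) < r \<longrightarrow> \<bar>a - b\<bar> < s)"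

definition coarse_arc :: "real \<times> (real \<Rightarrow> 'a::metric_space) \<Rightarrow> 'a \<Rightarrow> 'a \<Rightarrow> bool" where
  "coarse_arc ca x y \<longleftrightarrow> (case ca of (t, lam) \<Rightarrow>
     0 \<le> t \<and> coarse_embedding_on {0..t} lam \<and> lam 0 = x \<and> lam t = y)"

definition arc_image :: "real \<times> (real \<Rightarrow> 'a) \<Rightarrow> 'a set" where
  "arc_image ca = (case ca of (t, lam) \<Rightarrow> lam ` {0..t})"

definition equicoarse :: "(real \<times> (real \<Rightarrow> 'a::metric_space)) set \<Rightarrow> bool" where
  "equicoarse U \<longleftrightarrow>
     (\<forall>r>0. \<exists>s>0. \<forall>(t, lam)\<in>U. \<forall>a\<in>{0..t}. \<forall>b\<in>{0..t}. \<bar>a - b\<bar> < r \<longrightarrow> dist (lam a) (lam b) < s) \<and>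
     (\<forall>r>0. \<exists>s>0. \<forall>(t, lam)\<in>U. \<forall>a\<in>{0..t}. \<forall>b\<in>{0..t}. dist (lam a) (lam b) < r \<longrightarrow> \<bar>a - b\<bar> < s)"

definition coarse_Karlsson :: "('a::metric_space set \<Rightarrow> 'b set) \<Rightarrow> 'b topology \<Rightarrow> bool" where
  "coarse_Karlsson f TW \<longleftrightarrow>
     (\<exists>U::(real \<times> (real \<Rightarrow> 'a)) set. (\<forall>ca\<in>U. \<exists>x y. coarse_arc ca x y) \<and> equicoarse U \<and>
          (\<forall>x y. \<exists>ca\<in>U. coarse_arc ca x y) \<and>
          (\<forall>u\<in>unif (sum_top f TW). \<exists>S. bounded S \<and>
              (\<forall>ca\<in>U. arc_image ca \<inter> S = {} \<longrightarrow> small u (Inl ` arc_image ca))))"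

end

theory Submission
  imports Defs
begin

lemma K_open:
  assumes "hausdorff_compactification f TW"
  shows "openin (sum_top f TW) U \<longleftrightarrow> U \<subseteq> sum_carrier TW \<and> sum_closed f TW (sum_carrier TW - U)"
  using assms unfolding hausdorff_compactification_def sum_top_def by simp

lemma K_topspace:
  assumes "hausdorff_compactification f TW" "admissible f TW"
  shows "topspace (sum_top f TW) = sum_carrier TW"
proof -
  have "openin (sum_top f TW) (sum_carrier TW)"
    using assms by (simp add: K_open sum_closed_def admissible_def)
  hence "sum_carrier TW \<subseteq> topspace (sum_top f TW)" by (rule openin_subset)
  moreover have "topspace (sum_top f TW) \<subseteq> sum_carrier TW"
    using K_open[OF assms(1), of "topspace (sum_top f TW)"] by simp
  ultimately show ?thesis by blast
qed

lemma K_closed: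
  assumes "hausdorff_compactification f TW" "admissible f TW"
  shows "closedin (sum_top f TW) D \<longleftrightarrow> sum_closed f TW D"
proof -
  have "D \<subseteq> sum_carrier TW \<Longrightarrow> sum_carrier TW - (sum_carrier TW - D) = D" by blast
  thus ?thesis
    unfolding closedin_def K_topspace[OF assms] K_open[OF assms(1)]
    by (auto simp: sum_closed_def)
qed

lemma K_Inl_cont:
  assumes "hausdorff_compactification f TW" "admissible f TW"
  shows "continuous_map euclidean (sum_top f TW) Inl"
  unfolding continuous_map_closedin K_closed[OF assms] K_topspace[OF assms]
  by (auto simp: sum_carrier_def sum_closed_def vimage_def)

lemma K_Inl_compact_closed:
  assumes "hausdorff_compactification f TW" "admissible f TW" "compact C"
  shows "closedin (sum_top f TW) (Inl ` C)"
  apply (rule compactin_imp_closedin)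
  using assms(1) apply (simp add: hausdorff_compactification_def)
  apply (rule image_compactin[OF _ K_Inl_cont[OF assms(1,2)]])
  using assms(3) by simp

lemma K_Inl_open:
  assumes "hausdorff_compactification f TW" "admissible f TW" "open A"
  shows "openin (sum_top f TW) (Inl ` A)"
proof -
  have e: "sum_carrier TW - Inl ` A = Inl ` (- A) \<union> Inr ` topspace TW"
    by (auto simp: sum_carrier_def)
  have "closedin TW (f (- A))" using assms(2,3) by (simp add: admissible_def closed_def)
  hence "f (- A) \<subseteq> topspace TW" by (rule closedin_subset)
  moreover have "Inl -` (Inl ` (- A) \<union> Inr ` topspace TW) = - A" by auto
  moreover have "Inr -` (Inl ` (- A) \<union> Inr ` topspace TW) = topspace TW" by auto
  ultimately show ?thesis unfolding K_open[OF assms(1)] e sum_closed_def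
    using assms(3) by (auto simp: sum_carrier_def closed_def)
qed


lemma sep_closed:
  assumes "regular_space X" "openin X U1" "p \<in> U1"
  obtains V F where "openin X V" "closedin X F" "p \<in> V" "V \<subseteq> F" "F \<subseteq> U1"
proof -
  have "closedin X (topspace X - U1)" using assms(2) by blast
  moreover have "p \<in> topspace X - (topspace X - U1)" using assms(2,3) openin_subset by blast
  ultimately obtain V G where "openin X V" "openin X G" "p \<in> V" "topspace X - U1 \<subseteq> G" "disjnt V G"
    using assms(1) unfolding regular_space_def by metis
  moreover have "V \<subseteq> topspace X - G" using \<open>openin X V\<close> \<open>disjnt V G\<close> openin_subset
    by (auto simp: disjnt_def)
  moreover have "topspace X - G \<subseteq> U1" using \<open>topspace X - U1 \<subseteq> G\<close> by blast
  ultimately show ?thesis using that[of V "topspace X - G"] by blast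
qed

lemma equi2: "equicoarse U \<Longrightarrow> r>0 \<Longrightarrow> \<exists>s>0. \<forall>t lam a b. (t,lam)\<in>U \<longrightarrow> a\<in>{0..t} \<longrightarrow> b\<in>{0..t} \<longrightarrow> dist (lam a) (lam b) < r \<longrightarrow> \<bar>a-b\<bar> < s"
  unfolding equicoarse_def by (drule conjunct2, drule spec[of _ r]) fast
lemma equi1: "equicoarse U \<Longrightarrow> r>0 \<Longrightarrow> \<exists>s>0. \<forall>t lam a b. (t,lam)\<in>U \<longrightarrow> a\<in>{0..t} \<longrightarrow> b\<in>{0..t} \<longrightarrow> \<bar>a-b\<bar> < r \<longrightarrow> dist (lam a) (lam b) < s"
  unfolding equicoarse_def by (drule conjunct1, drule spec[of _ r]) fast

theorem mainTheorem16:
  fixes f :: "'a::metric_space set \<Rightarrow> 'b set" and TW :: "'b topology"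
  assumes "proper_metric TYPE('a)"
    and "admissible f TW"
    and "hausdorff_compactification f TW"
    and "coarse_Karlsson f TW"
  shows "Pers f TW"
  unfolding Pers_def
proof (intro conjI ballI)
  show hc: "hausdorff_compactification f TW" by fact
  note adm = assms(2)
  let ?K = "sum_top f TW"
  have tK: "topspace ?K = sum_carrier TW" using K_topspace[OF hc adm] .
  have cpt: "compact (cball (x::'a) r)" for x r
    using assms(1) unfolding proper_metric_def by simp
  have Haus: "Hausdorff_space ?K" and cK: "compact_space ?K"
    using hc unfolding hausdorff_compactification_def by auto
  have reg: "regular_space ?K" using compact_Hausdorff_imp_regular_space[OF cK Haus] .
  fix e :: "('a \<times> 'a) set"
  assume "e \<in> bounded_coarse"
  then obtain R0 where R0: "\<And>x y. (x, y) \<in> e \<Longrightarrow> dist x y \<le> R0"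
    unfolding bounded_coarse_def by fast
  define R where "R = max R0 0"
  have R: "\<And>x y. (x, y) \<in> e \<Longrightarrow> dist x y \<le> R" using R0 unfolding R_def by force
  have R00: "R \<ge> 0" unfolding R_def by simp
  show "perspective f TW e"
    unfolding perspective_def
  proof (rule subsetI)
    fix P assume P: "P \<in> prod_topology ?K ?K closure_of (\<lambda>(x, y). (Inl x, Inl y)) ` e \<inter>
        (sum_carrier TW \<times> sum_carrier TW - range Inl \<times> range Inl)"
    obtain p q where Pq: "P = (p, q)" by fastforce
    have pK: "p \<in> sum_carrier TW" and qK: "q \<in> sum_carrier TW" and nX: "\<not> (p \<in> range Inl \<and> q \<in> range Inl)"
      using P Pq by auto
    have hcl: "\<exists>a b. (a, b) \<in> e \<and> Inl a \<in> A \<and> Inl b \<in> B"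
      if "p \<in> A" "q \<in> B" "openin ?K A" "openin ?K B" for A B
    proof -
      have "openin (prod_topology ?K ?K) (A \<times> B)"
        using that by (simp add: openin_prod_Times_iff)
      moreover have "(p, q) \<in> A \<times> B" using that by simp
      moreover have "P \<in> prod_topology ?K ?K closure_of (\<lambda>(x, y). (Inl x, Inl y)) ` e"
        using P by (rule IntD1)
      ultimately obtain y where "y \<in> (\<lambda>(x, y). (Inl x, Inl y)) ` e" "y \<in> A \<times> B"
        using Pq unfolding in_closure_of by metis
      thus ?thesis by auto
    qed
    show "P \<in> {(p, p) |p. p \<in> Inr ` topspace TW}"
    proof (cases p)
      case (Inl x)
      then obtain w where qw: "q = Inr w" using nX by (cases q) auto
      have o1: "openin ?K (Inl ` ball x 1)" by (rule K_Inl_open[OF hc adm]) simp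
      have o2: "openin ?K (sum_carrier TW - Inl ` cball x (R + 1))"
        using K_Inl_compact_closed[OF hc adm cpt] tK by (metis openin_diff openin_topspace)
      obtain a b where ab: "(a, b) \<in> e" "Inl a \<in> Inl ` ball x 1" "Inl b \<in> sum_carrier TW - Inl ` cball x (R + 1)"
        using hcl[OF _ _ o1 o2] Inl qw qK by auto
      have "dist x b \<le> dist x a + dist a b" by (rule dist_triangle)
      moreover have "dist x a < 1" using ab(2) by auto
      moreover have "dist a b \<le> R" using R[OF ab(1)] .
      ultimately have "b \<in> cball x (R + 1)" by simp
      thus ?thesis using ab(3) by auto
    next
      case (Inr w)
      show ?thesis
      proof (cases q)
        case (Inl x)
        have o1: "openin ?K (Inl ` ball x 1)" by (rule K_Inl_open[OF hc adm]) simp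
        have o2: "openin ?K (sum_carrier TW - Inl ` cball x (R + 1))"
          using K_Inl_compact_closed[OF hc adm cpt] tK by (metis openin_diff openin_topspace)
        obtain a b where ab: "(a, b) \<in> e" "Inl b \<in> Inl ` ball x 1" "Inl a \<in> sum_carrier TW - Inl ` cball x (R + 1)"
          using hcl[OF _ _ o2 o1] Inl Inr pK by auto
        have "dist x a \<le> dist x b + dist a b" by (metis dist_commute dist_triangle)
        moreover have "dist x b < 1" using ab(2) by auto
        moreover have "dist a b \<le> R" using R[OF ab(1)] .
        ultimately have "a \<in> cball x (R + 1)" by simp
        thus ?thesis using ab(3) by auto
      next
        case (Inr w')
        show ?thesis
        proof (cases "p = q")
          case True
          thus ?thesis using Pq pK \<open>p = Inr w\<close> by (auto simp: sum_carrier_def)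
        next
          case False
          have pT: "p \<in> topspace ?K" and qT: "q \<in> topspace ?K" using pK qK tK by auto
          obtain U1 U2 where U: "openin ?K U1" "openin ?K U2" "p \<in> U1" "q \<in> U2" "disjnt U1 U2"
            using Haus pT qT False unfolding Hausdorff_space_def by metis
          obtain V1 F1 where VF1: "openin ?K V1" "closedin ?K F1" "p \<in> V1" "V1 \<subseteq> F1" "F1 \<subseteq> U1"
            using sep_closed[OF reg U(1,3)] by metis
          obtain V2 F2 where VF2: "openin ?K V2" "closedin ?K F2" "q \<in> V2" "V2 \<subseteq> F2" "F2 \<subseteq> U2"
            using sep_closed[OF reg U(2,4)] by metis
          define u where "u = topspace ?K \<times> topspace ?K - F1 \<times> F2"
          have uo: "openin (prod_topology ?K ?K) u"
            unfolding u_def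
            by (metis VF1(2) VF2(2) closedin_prod_Times_iff openin_diff openin_topspace topspace_prod_topology)
          have "u \<in> unif ?K"
            unfolding unif_def
          proof (intro CollectI conjI exI)
            show "u \<subseteq> topspace ?K \<times> topspace ?K" by (auto simp: u_def)
            show "openin (prod_topology ?K ?K) u" by fact
            show "u \<subseteq> u" by simp
            show "\<forall>p\<in>topspace ?K. (p, p) \<in> u"
              using VF1(5) VF2(5) U(5) by (auto simp: u_def disjnt_def)
          qed
          from assms(4) obtain Ups :: "(real \<times> (real \<Rightarrow> 'a)) set" where
            Ups0: "(\<forall>ca\<in>Ups. \<exists>x y. coarse_arc ca x y) \<and> equicoarse Ups \<and>
              (\<forall>x y. \<exists>ca\<in>Ups. coarse_arc ca x y) \<and>
              (\<forall>u\<in>unif ?K. \<exists>S. bounded S \<and>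
                (\<forall>ca\<in>Ups. arc_image ca \<inter> S = {} \<longrightarrow> small u (Inl ` arc_image ca)))"
            unfolding coarse_Karlsson_def by (elim exE) (rule that)
          have Ups: "equicoarse Ups" "\<forall>x y. \<exists>ca\<in>Ups. coarse_arc ca x y"
              "\<forall>u\<in>unif ?K. \<exists>S. bounded S \<and>
                (\<forall>ca\<in>Ups. arc_image ca \<inter> S = {} \<longrightarrow> small u (Inl ` arc_image ca))"
            using Ups0 by (rule conjunct1[OF conjunct2], rule conjunct1[OF conjunct2[OF conjunct2]], rule conjunct2[OF conjunct2[OF conjunct2]])
          obtain S where S: "bounded S"
            "\<And>ca. ca\<in>Ups \<Longrightarrow> arc_image ca \<inter> S = {} \<Longrightarrow> small u (Inl ` arc_image ca)"
          proof -
            from bspec[OF Ups(3) \<open>u \<in> unif ?K\<close>] obtain S where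
              "bounded S \<and> (\<forall>ca\<in>Ups. arc_image ca \<inter> S = {} \<longrightarrow> small u (Inl ` arc_image ca))"
              by (elim exE)
            thus ?thesis using that by blast
          qed
          obtain x0 M where SM: "\<And>y. y \<in> S \<Longrightarrow> dist x0 y \<le> M"
            using S(1) unfolding bounded_def by blast
          obtain s where s: "s > 0" "\<And>t lam a b. (t, lam) \<in> Ups \<Longrightarrow> a \<in> {0..t} \<Longrightarrow> b \<in> {0..t} \<Longrightarrow>
               dist (lam a) (lam b) < R + 1 \<Longrightarrow> \<bar>a - b\<bar> < s"
          proof -
            have "R + 1 > 0" using R00 by simp
            thus ?thesis using equi2[OF Ups(1)] that by meson
          qed
          obtain s' where s': "s' > 0" "\<And>t lam a b. (t, lam) \<in> Ups \<Longrightarrow> a \<in> {0..t} \<Longrightarrow> b \<in> {0..t} \<Longrightarrow>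
               \<bar>a - b\<bar> < s + 1 \<Longrightarrow> dist (lam a) (lam b) < s'"
          proof -
            have "s + 1 > 0" using s by simp
            thus ?thesis using equi1[OF Ups(1)] that by meson
          qed
          define N where "N = M + s'"
          have oc: "openin ?K (V - Inl ` cball x0 N)" if "openin ?K V" for V
            using that K_Inl_compact_closed[OF hc adm cpt] by (metis openin_diff)
          obtain a b where ab: "(a, b) \<in> e" "Inl a \<in> V1 - Inl ` cball x0 N" "Inl b \<in> V2 - Inl ` cball x0 N"
            using hcl[OF _ _ oc[OF VF1(1)] oc[OF VF2(1)]] VF1(3) VF2(3) \<open>p = Inr w\<close> \<open>q = Inr w'\<close> by auto
          obtain ca where ca: "ca \<in> Ups" "coarse_arc ca a b" using Ups(2) by blast
          obtain t lam where tl: "ca = (t, lam)" by fastforce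
          have t0: "0 \<le> t" "lam 0 = a" "lam t = b" using ca(2) tl by (auto simp: coarse_arc_def)
          have "dist (lam 0) (lam t) < R + 1" using R[OF ab(1)] t0 by simp
          hence "\<bar>0 - t\<bar> < s" using s(2)[of t lam 0 t] ca(1) tl t0 by auto
          hence dl: "dist a (lam c) < s'" if "c \<in> {0..t}" for c
            using s'(2)[of t lam 0 c] ca(1) tl t0 that by auto
          have "arc_image ca \<inter> S = {}"
          proof (rule ccontr)
            assume "arc_image ca \<inter> S \<noteq> {}"
            then obtain z where "z \<in> lam ` {0..t}" "z \<in> S" using tl by (auto simp: arc_image_def)
            then obtain c where c: "c \<in> {0..t}" "lam c \<in> S" by blast
            have "dist x0 a \<le> dist x0 (lam c) + dist a (lam c)" by (metis dist_commute dist_triangle)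
            also have "\<dots> < M + s'" using SM[OF c(2)] dl[OF c(1)] by simp
            finally have "a \<in> cball x0 N" by (simp add: N_def)
            thus False using ab(2) by auto
          qed
          hence "small u (Inl ` arc_image ca)" using S(2) ca(1) by blast
          moreover have "a \<in> arc_image ca"
            using t0 tl unfolding arc_image_def by (auto intro!: image_eqI[of _ lam 0])
          moreover have "b \<in> arc_image ca"
            using t0 tl unfolding arc_image_def by (auto intro!: image_eqI[of _ lam t])
          ultimately have "(Inl a, Inl b) \<in> u" unfolding small_def by blast
          moreover have "Inl a \<in> F1" "Inl b \<in> F2" using ab VF1(4) VF2(4) by auto
          ultimately show ?thesis by (simp add: u_def)
        qed
      qed
    qed
  qed
qed

end
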